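(* Consider the network $\Sigma$ (with all the structural assumptions in the context), let $M\in\mathbb{N}$, and let $\mathcal{A}_i\subset\mathbb{R}^{n_i}$, $i\in\mathbb{N}$, be nonempty closed sets such that $(\mathcal{A}_i)_{i\in\mathbb{N}}$ is uniformly bounded (there is $C>0$ with $|z|\le C$ for all $i$ and all $z\in\mathcal{A}_i$). Suppose that for each $i\in\mathbb{N}$ there exist a continuous $W_i:\mathbb{R}^{n_i}\to[0,\infty)$, functions $\underline\omega_i,\overline\omega_i\in\mathcal{K}_\infty$, $\gamma_{ij}\in\mathcal{K}_\infty\cup\{0\}$ ($j\in\mathbb{N}$) and $\gamma_{iu}\in\mathcal{K}$ such that (1) $\underline\omega_i(|\xi_i|_{\mathcal{A}_i})\le W_i(\xi_i)\le\overline\omega_i(|\xi_i|_{\mathcal{A}_i})$ for all $\xi_i\in\mathbb{R}^{n_i}$; (2) $W_i(x_i(M,\xi,u))\le\max\{\sup_{j\in\mathbb{N}}\gamma_{ij}(W_j(\xi_j)),\gamma_{iu}(\|u\|_\infty)\}$ for all $\xi\in X$, $u\in\mathcal{U}$; and that these satisfy the uniformity conditions: there exist $\underline\omega,\overline\omega\in\mathcal{K}_\infty$ with $\underline\omega\le\underline\omega_i\le\overline\omega_i\le\overline\omega$ for all $i$; there exists $\alpha\in\mathcal{K}_\infty$ with $\alpha(s)<s$ for all $s>0$ and $\gamma_{ij}\le\alpha$ for all $i,j$; and there is $\bar\gamma_u\in\mathcal{K}$ with $\gamma_{iu}\le\bar\gamma_u$ for all $i$. Then $\Sigma^M$ is well-posed,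 i.e. $f^M(x,(u_0,\dots,u_{M-1}))\in X$ for all $x\in X$ and $u_0,\dots,u_{M-1}\in U$.
   Context: For each $i\in\mathbb{N}$ fix positive integers $n_i,p_i$, norms $|\cdot|$ on $\mathbb{R}^{n_i},\mathbb{R}^{p_i}$, and a finite set $I_i\subset\mathbb{N}\setminus\{i\}$ such that each set $\{j\in\mathbb{N}: i\in I_j\}$ is finite; $X(I_i)=\prod_{j\in I_i}\mathbb{R}^{n_j}$ with norm $\sup_{j\in I_i}|x_j|$; $f_i:\mathbb{R}^{n_i}\times X(I_i)\times\mathbb{R}^{p_i}\to\mathbb{R}^{n_i}$ continuous. $X_E=\prod_i\mathbb{R}^{n_i}$; $X$ (resp. $U$) the subspace of sequences $(x_i)$ with $x_i\in\mathbb{R}^{n_i}$ (resp. $(u_i)$, $u_i\in\mathbb{R}^{p_i}$) with finite norm $\sup_i|x_i|=:|x|_\infty$. $f:X_E\times U\to X_E$, $f(x,u)_i=f_i(x_i,(x_j)_{j\in I_i},u_i)$; network $\Sigma$: $x(k+1)=f(x(k),u(k))$. $\mathcal{U}$: sequences $u:\mathbb{N}_0\to U$ with $\|u\|_\infty=\sup_k|u(k)|_\infty<\infty$; for $\xi\in X_E$, $x(k,\xi,u)\in X_E$ denotes the solution with $x(0)=\xi$ and $x_i(k,\xi,u)$ its $i$-th component. Iterates: $f^1=f$, $f^{k+1}(x,(u_0,\dots,u_k))=f(f^k(x,(u_0,\dots,u_{k-1})),u_k)$. $|z|_{\mathcal{A}_i}=\inf_{y\in\mathcal{A}_i}|z-y|$.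 $\mathcal{K}$, $\mathcal{K}_\infty$ are the standard comparison classes; inequalities between functions are pointwise. *)

theory Defs
  imports "HOL-Analysis.Analysis"
begin

text \<open>A vector of R^n is represented as a function nat => real vanishing from index n on.
  A network state is a sequence of such vectors.\<close>

type_synonym vec = "nat \<Rightarrow> real"
type_synonym state = "nat \<Rightarrow> vec"

definition Rn :: "nat \<Rightarrow> vec set" where
  "Rn n = {v. \<forall>k\<ge>n. v k = 0}"

definition is_norm_on :: "vec set \<Rightarrow> (vec \<Rightarrow> real) \<Rightarrow> bool" where
  "is_norm_on S N \<longleftrightarrow>
     (\<forall>x\<in>S. N x \<ge> 0 \<and> (N x = 0 \<longleftrightarrow> x = (\<lambda>_. 0))) \<and>
     (\<forall>x\<in>S. \<forall>c::real. N (\<lambda>k. c * x k) = \<bar>c\<bar> * N x) \<and>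
     (\<forall>x\<in>S. \<forall>y\<in>S. N (\<lambda>k. x k + y k) \<le> N x + N y)"

definition classK :: "(real \<Rightarrow> real) \<Rightarrow> bool" where
  "classK g \<longleftrightarrow> continuous_on {0..} g \<and> g 0 = 0 \<and> strict_mono_on {0..} g"

definition classKinf :: "(real \<Rightarrow> real) \<Rightarrow> bool" where
  "classKinf g \<longleftrightarrow> classK g \<and> filterlim g at_top at_top"

definition setdist_N :: "(vec \<Rightarrow> real) \<Rightarrow> vec set \<Rightarrow> vec \<Rightarrow> real" where
  "setdist_N N A z = Inf ((\<lambda>y. N (\<lambda>k. z k - y k)) ` A)"

definition inX :: "(nat \<Rightarrow> nat) \<Rightarrow> (nat \<Rightarrow> vec \<Rightarrow> real) \<Rightarrow> state \<Rightarrow> bool" where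
  "inX n N x \<longleftrightarrow> (\<forall>i. x i \<in> Rn (n i)) \<and> bdd_above (range (\<lambda>i. N i (x i)))"

definition supnorm :: "(nat \<Rightarrow> vec \<Rightarrow> real) \<Rightarrow> state \<Rightarrow> real" where
  "supnorm N x = (SUP i. N i (x i))"

definition inUU :: "(nat \<Rightarrow> nat) \<Rightarrow> (nat \<Rightarrow> vec \<Rightarrow> real) \<Rightarrow> (nat \<Rightarrow> state) \<Rightarrow> bool" where
  "inUU p Nu u \<longleftrightarrow> (\<forall>k. inX p Nu (u k)) \<and> bdd_above (range (\<lambda>k. supnorm Nu (u k)))"

definition unorm :: "(nat \<Rightarrow> vec \<Rightarrow> real) \<Rightarrow> (nat \<Rightarrow> state) \<Rightarrow> real" where
  "unorm Nu u = (SUP k. supnorm Nu (u k))"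

definition netmap :: "(nat \<Rightarrow> vec \<Rightarrow> state \<Rightarrow> vec \<Rightarrow> vec) \<Rightarrow> (nat \<Rightarrow> nat set) \<Rightarrow> state \<Rightarrow> state \<Rightarrow> state" where
  "netmap f I x u = (\<lambda>i. f i (x i) (\<lambda>j. if j \<in> I i then x j else (\<lambda>_. 0)) (u i))"

text \<open>Solution x(k, xi, u); also the iterate f^k(xi,(u_0,...,u_{k-1})) for k >= 1.\<close>
primrec traj :: "(nat \<Rightarrow> vec \<Rightarrow> state \<Rightarrow> vec \<Rightarrow> vec) \<Rightarrow> (nat \<Rightarrow> nat set) \<Rightarrow> state \<Rightarrow> (nat \<Rightarrow> state) \<Rightarrow> nat \<Rightarrow> state" where
  "traj f I \<xi> u 0 = \<xi>"
| "traj f I \<xi> u (Suc k) = netmap f I (traj f I \<xi> u k) (u k)"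

definition fdom :: "(nat \<Rightarrow> nat) \<Rightarrow> (nat \<Rightarrow> nat) \<Rightarrow> (nat \<Rightarrow> nat set) \<Rightarrow> nat \<Rightarrow> (vec \<times> state \<times> vec) set" where
  "fdom n p I i = {(a, b, c). a \<in> Rn (n i) \<and> (\<forall>j\<in>I i. b j \<in> Rn (n j)) \<and>
                      (\<forall>j. j \<notin> I i \<longrightarrow> b j = (\<lambda>_. 0)) \<and> c \<in> Rn (p i)}"

end

theory Submission
  imports Defs
begin

lemma Rn_diff: "x \<in> Rn m \<Longrightarrow> a \<in> Rn m \<Longrightarrow> (\<lambda>k. x k - a k) \<in> Rn m"
  by (simp add: Rn_def)

lemma Rn_zero: "(\<lambda>_. 0) \<in> Rn m"
  by (simp add: Rn_def)

lemma norm_tri_ax: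
  assumes "is_norm_on S Nf" "x \<in> S" "y \<in> S"
  shows "Nf (\<lambda>k. x k + y k) \<le> Nf x + Nf y"
proof -
  have h: "\<forall>x\<in>S. \<forall>y\<in>S. Nf (\<lambda>k. x k + y k) \<le> Nf x + Nf y"
    using assms(1) unfolding is_norm_on_def by (rule conjunct2[THEN conjunct2])
  show ?thesis using h[rule_format, OF assms(2,3)] .
qed

lemma norm_hom_ax:
  assumes "is_norm_on S Nf" "x \<in> S"
  shows "Nf (\<lambda>k. c * x k) = \<bar>c\<bar> * Nf x"
proof -
  have h: "\<forall>x\<in>S. \<forall>c::real. Nf (\<lambda>k. c * x k) = \<bar>c\<bar> * Nf x"
    using assms(1) unfolding is_norm_on_def by (rule conjunct2[THEN conjunct1])
  show ?thesis using h[rule_format, OF assms(2)] .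
qed

lemma norm_nonneg':
  assumes "is_norm_on S Nf" "x \<in> S"
  shows "Nf x \<ge> 0"
proof -
  have h: "\<forall>x\<in>S. Nf x \<ge> 0 \<and> (Nf x = 0 \<longleftrightarrow> x = (\<lambda>_. 0))"
    using assms(1) unfolding is_norm_on_def by (rule conjunct1)
  show ?thesis using h[rule_format, OF assms(2)] by (rule conjunct1)
qed

lemma norm_zero':
  assumes "is_norm_on (Rn m) Nf"
  shows "Nf (\<lambda>_. 0) = 0"
proof -
  have h: "\<forall>x\<in>Rn m. Nf x \<ge> 0 \<and> (Nf x = 0 \<longleftrightarrow> x = (\<lambda>_. 0))"
    using assms(1) unfolding is_norm_on_def by (rule conjunct1)
  have "Nf (\<lambda>_. 0) = 0 \<longleftrightarrow> (\<lambda>_::nat. 0::real) = (\<lambda>_. 0)"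
    using h[rule_format, OF Rn_zero] by (rule conjunct2)
  then show ?thesis by simp
qed

lemma norm_tri:
  assumes "is_norm_on (Rn m) Nf" "x \<in> Rn m" "a \<in> Rn m"
  shows "Nf x \<le> Nf (\<lambda>k. x k - a k) + Nf a"
  using norm_tri_ax[OF assms(1) Rn_diff[OF assms(2,3)] assms(3)] by simp

lemma norm_diff:
  assumes "is_norm_on (Rn m) Nf" "x \<in> Rn m" "a \<in> Rn m"
  shows "Nf (\<lambda>k. x k - a k) \<le> Nf x + Nf a"
proof -
  have na: "(\<lambda>k. (-1) * a k) \<in> Rn m" using assms(3) by (simp add: Rn_def)
  have "Nf (\<lambda>k. (-1) * a k) = Nf a"
    using norm_hom_ax[OF assms(1,3), of "-1"] by simp
  moreover have "Nf (\<lambda>k. x k + (-1) * a k) \<le> Nf x + Nf (\<lambda>k. (-1) * a k)"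
    using norm_tri_ax[OF assms(1,2) na] .
  ultimately show ?thesis by simp
qed

lemma setdist_bdd:
  assumes "is_norm_on (Rn m) Nf" "A \<subseteq> Rn m" "z \<in> Rn m"
  shows "bdd_below ((\<lambda>y. Nf (\<lambda>k. z k - y k)) ` A)"
  using assms norm_nonneg'[OF assms(1) Rn_diff] by (auto intro!: bdd_belowI[where m=0])

lemma setdist_le:
  assumes "is_norm_on (Rn m) Nf" "A \<subseteq> Rn m" "z \<in> Rn m" "a \<in> A"
  shows "setdist_N Nf A z \<le> Nf (\<lambda>k. z k - a k)"
  unfolding setdist_N_def using setdist_bdd[OF assms(1-3)] assms(4)
  by (simp add: cInf_lower)

lemma setdist_nonneg:
  assumes "is_norm_on (Rn m) Nf" "A \<subseteq> Rn m" "z \<in> Rn m" "A \<noteq> {}"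
  shows "setdist_N Nf A z \<ge> 0"
  unfolding setdist_N_def using assms norm_nonneg'[OF assms(1) Rn_diff]
  by (intro cInf_greatest) auto

lemma setdist_wit:
  assumes "is_norm_on (Rn m) Nf" "A \<subseteq> Rn m" "z \<in> Rn m" "A \<noteq> {}"
  shows "\<exists>a\<in>A. Nf (\<lambda>k. z k - a k) < setdist_N Nf A z + 1"
proof -
  have "Inf ((\<lambda>y. Nf (\<lambda>k. z k - y k)) ` A) < setdist_N Nf A z + 1"
    unfolding setdist_N_def by simp
  then show ?thesis
    using cInf_less_iff[OF _ setdist_bdd[OF assms(1-3)]] assms(4) by auto
qed

lemma traj_cong: "(\<forall>j<k. u j = v j) \<Longrightarrow> traj f I x u k = traj f I x v k"
  by (induction k) auto

lemma Kinf_bound: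
  assumes "classKinf w"
  shows "\<exists>D. \<forall>s\<ge>0. w s \<le> K \<longrightarrow> s \<le> D"
proof -
  have "\<forall>\<^sub>F s in at_top. w s > K" using assms unfolding classKinf_def
    by (simp add: filterlim_at_top_dense)
  then obtain D where D: "\<And>s. s \<ge> D \<Longrightarrow> w s > K" by (auto simp: eventually_at_top_linorder)
  show ?thesis
  proof (intro exI allI impI)
    fix s :: real assume "s \<ge> 0" "w s \<le> K"
    show "s \<le> max D 0"
    proof (rule ccontr)
      assume "\<not> s \<le> max D 0"
      then have "w s > K" using D by auto
      then show False using \<open>w s \<le> K\<close> by simp
    qed
  qed
qed

lemma K_mono: "classK g \<Longrightarrow> 0 \<le> s \<Longrightarrow> s \<le> t \<Longrightarrow> g s \<le> g t"
  unfolding classK_def strict_mono_on_def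
  by (cases "s = t") (auto intro: less_imp_le)

theorem theorem1:
  fixes n p :: "nat \<Rightarrow> nat"
    and N Nu :: "nat \<Rightarrow> vec \<Rightarrow> real"
    and I :: "nat \<Rightarrow> nat set"
    and f :: "nat \<Rightarrow> vec \<Rightarrow> state \<Rightarrow> vec \<Rightarrow> vec"
    and M :: nat
    and A :: "nat \<Rightarrow> vec set"
    and W :: "nat \<Rightarrow> vec \<Rightarrow> real"
    and wl wu :: "nat \<Rightarrow> real \<Rightarrow> real"
    and \<gamma> :: "nat \<Rightarrow> nat \<Rightarrow> real \<Rightarrow> real"
    and \<gamma>u :: "nat \<Rightarrow> real \<Rightarrow> real"
  assumes n_pos: "\<forall>i. n i > 0" and p_pos: "\<forall>i. p i > 0"
    and norms: "\<forall>i. is_norm_on (Rn (n i)) (N i)" and unorms: "\<forall>i. is_norm_on (Rn (p i)) (Nu i)"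
    and I_fin: "\<forall>i. finite (I i)" and I_irr: "\<forall>i. i \<notin> I i"
    and I_inv_fin: "\<forall>i. finite {j. i \<in> I j}"
    and f_cont: "\<forall>i. continuous_on (fdom n p I i) (\<lambda>(a, b, c). f i a b c)"
    and f_range: "\<forall>i. \<forall>(a, b, c)\<in>fdom n p I i. f i a b c \<in> Rn (n i)"
    and M_pos: "M \<ge> 1"
    and A_sub: "\<forall>i. A i \<subseteq> Rn (n i)" and A_ne: "\<forall>i. A i \<noteq> {}" and A_closed: "\<forall>i. closed (A i)"
    and A_bdd: "\<exists>C>0. \<forall>i. \<forall>z\<in>A i. N i z \<le> C"
    and W_cont: "\<forall>i. continuous_on (Rn (n i)) (W i)"
    and W_nonneg: "\<forall>i. \<forall>z\<in>Rn (n i). W i z \<ge> 0"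
    and wl_K: "\<forall>i. classKinf (wl i)" and wu_K: "\<forall>i. classKinf (wu i)"
    and \<gamma>_K: "\<forall>i j. classKinf (\<gamma> i j) \<or> (\<forall>s\<ge>0. \<gamma> i j s = 0)"
    and \<gamma>u_K: "\<forall>i. classK (\<gamma>u i)"
    and sandwich: "\<forall>i. \<forall>\<xi>i\<in>Rn (n i).
          wl i (setdist_N (N i) (A i) \<xi>i) \<le> W i \<xi>i \<and> W i \<xi>i \<le> wu i (setdist_N (N i) (A i) \<xi>i)"
    and decay: "\<forall>i. \<forall>\<xi> u. inX n N \<xi> \<longrightarrow> inUU p Nu u \<longrightarrow>
          ereal (W i (traj f I \<xi> u M i))
            \<le> max (SUP j. ereal (\<gamma> i j (W j (\<xi> j)))) (ereal (\<gamma>u i (unorm Nu u)))"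
    and unif_w: "\<exists>wL wU. classKinf wL \<and> classKinf wU \<and>
          (\<forall>i. \<forall>s\<ge>0. wL s \<le> wl i s \<and> wl i s \<le> wu i s \<and> wu i s \<le> wU s)"
    and unif_\<gamma>: "\<exists>\<alpha>. classKinf \<alpha> \<and> (\<forall>s>0. \<alpha> s < s) \<and> (\<forall>i j. \<forall>s\<ge>0. \<gamma> i j s \<le> \<alpha> s)"
    and unif_\<gamma>u: "\<exists>g. classK g \<and> (\<forall>i. \<forall>s\<ge>0. \<gamma>u i s \<le> g s)"
  shows "\<forall>x us. inX n N x \<longrightarrow> (\<forall>k<M. inX p Nu (us k)) \<longrightarrow> inX n N (traj f I x us M)"
proof (intro allI impI)
  fix x us assume hx: "inX n N x" and hus: "\<forall>k<M. inX p Nu (us k)"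
  define u where "u k = (if k < M then us k else (\<lambda>_ _. 0))" for k :: nat
  have teq: "traj f I x us M = traj f I x u M"
    by (rule traj_cong) (simp add: u_def)
  have zX: "inX p Nu (\<lambda>_ _. 0)"
    unfolding inX_def using Rn_zero norm_zero'[OF unorms[rule_format]] by simp
  have uX: "\<forall>k. inX p Nu (u k)" using hus zX by (simp add: u_def)
  have "range (\<lambda>k. supnorm Nu (u k)) \<subseteq> (\<lambda>k. supnorm Nu (u k)) ` {..M}"
  proof
    fix r assume "r \<in> range (\<lambda>k. supnorm Nu (u k))"
    then obtain k where k: "r = supnorm Nu (u k)" by auto
    show "r \<in> (\<lambda>k. supnorm Nu (u k)) ` {..M}"
    proof (cases "k < M")
      case True then show ?thesis using k by auto
    next
      case False then have "u k = u M" by (simp add: u_def)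
      then show ?thesis using k by auto
    qed
  qed
  then have "bdd_above (range (\<lambda>k. supnorm Nu (u k)))"
    by (rule bdd_above_mono[OF bdd_above_finite[OF finite_imageI[OF finite_atMost]]])
  then have hu: "inUU p Nu u" using uX unfolding inUU_def by simp
  have Rnt: "\<forall>i. traj f I x u k i \<in> Rn (n i)" for k
  proof (induction k)
    case 0 then show ?case using hx by (simp add: inX_def)
  next
    case (Suc k)
    show ?case
    proof
      fix i
      have "(traj f I x u k i, (\<lambda>j. if j \<in> I i then traj f I x u k j else (\<lambda>_. 0)), u k i) \<in> fdom n p I i" (is "?m \<in> _")
        using Suc uX by (simp add: fdom_def inX_def)
      note mem = this
      have fr: "\<forall>(a, b, c)\<in>fdom n p I i. f i a b c \<in> Rn (n i)" using f_range by (rule spec)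
      from bspec[OF fr mem]
      have "f i (traj f I x u k i) (\<lambda>j. if j \<in> I i then traj f I x u k j else (\<lambda>_. 0)) (u k i) \<in> Rn (n i)"
        by simp
      then show "traj f I x u (Suc k) i \<in> Rn (n i)"
        by (simp add: netmap_def)
    qed
  qed
  obtain C where C: "C > 0" "\<forall>i. \<forall>z\<in>A i. N i z \<le> C" using A_bdd by blast
  obtain wL wU where wLU: "classKinf wL" "classKinf wU"
    "\<forall>i. \<forall>s\<ge>0. wL s \<le> wl i s \<and> wl i s \<le> wu i s \<and> wu i s \<le> wU s" using unif_w by blast
  obtain \<alpha> where al: "classKinf \<alpha>" "\<forall>s>0. \<alpha> s < s" "\<forall>i j. \<forall>s\<ge>0. \<gamma> i j s \<le> \<alpha> s"
    using unif_\<gamma> by blast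
  obtain g where g: "classK g" "\<forall>i. \<forall>s\<ge>0. \<gamma>u i s \<le> g s" using unif_\<gamma>u by blast
  obtain B where B: "\<forall>i. N i (x i) \<le> B" using hx unfolding inX_def bdd_above_def by auto
  have xR: "x j \<in> Rn (n j)" for j using hx by (simp add: inX_def)
  have Wx: "W j (x j) \<le> wU (B + C)" for j
  proof -
    obtain a where a: "a \<in> A j" using A_ne by blast
    have aR: "a \<in> Rn (n j)" using a A_sub by blast
    have d0: "setdist_N (N j) (A j) (x j) \<ge> 0"
      using setdist_nonneg[OF norms[rule_format] A_sub[rule_format] xR A_ne[rule_format]] .
    have "setdist_N (N j) (A j) (x j) \<le> N j (\<lambda>k. x j k - a k)"
      using setdist_le[OF norms[rule_format] A_sub[rule_format] xR a] .
    also have "\<dots> \<le> N j (x j) + N j a" using norm_diff[OF norms[rule_format] xR aR] .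
    also have "\<dots> \<le> B + C" using B C a by (meson add_mono)
    finally have dB: "setdist_N (N j) (A j) (x j) \<le> B + C" .
    have "W j (x j) \<le> wu j (setdist_N (N j) (A j) (x j))" using sandwich[rule_format, OF xR] by (rule conjunct2)
    also have "\<dots> \<le> wU (setdist_N (N j) (A j) (x j))" using wLU(3)[rule_format, OF d0] by simp
    also have "\<dots> \<le> wU (B + C)" using K_mono[OF _ d0 dB] wLU(2) by (simp add: classKinf_def)
    finally show ?thesis .
  qed
  have Wx0: "W j (x j) \<ge> 0" for j using W_nonneg xR by blast
  have gam: "\<gamma> i j (W j (x j)) \<le> W j (x j)" for i j
  proof (cases "W j (x j) = 0")
    case True
    have "\<alpha> 0 = 0" using al(1) by (simp add: classKinf_def classK_def)
    moreover have "\<gamma> i j 0 \<le> \<alpha> 0" using al(3) by simp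
    ultimately show ?thesis using True by simp
  next
    case False
    then have "W j (x j) > 0" using Wx0[of j] by simp
    then have "\<alpha> (W j (x j)) < W j (x j)" using al(2) by blast
    moreover have "\<gamma> i j (W j (x j)) \<le> \<alpha> (W j (x j))" using al(3) Wx0[of j] by blast
    ultimately show ?thesis by linarith
  qed
  define R where "R = unorm Nu u"
  have R0: "R \<ge> 0"
  proof -
    have "Nu 0 (u 0 0) \<ge> 0" using uX unorms norm_nonneg' unfolding inX_def by blast
    also have "Nu 0 (u 0 0) \<le> supnorm Nu (u 0)"
      unfolding supnorm_def using uX by (intro cSUP_upper) (auto simp: inX_def)
    also have "supnorm Nu (u 0) \<le> R"
      unfolding R_def unorm_def using hu by (intro cSUP_upper) (auto simp: inUU_def)
    finally show ?thesis .
  qed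
  define K where "K = max (wU (B + C)) (g R)"
  have WK: "W i (traj f I x u M i) \<le> K" for i
  proof -
    have "(SUP j. ereal (\<gamma> i j (W j (x j)))) \<le> ereal K"
    proof (rule SUP_least)
      fix j
      have "\<gamma> i j (W j (x j)) \<le> K" using gam[of i j] Wx[of j] unfolding K_def by linarith
      then show "ereal (\<gamma> i j (W j (x j))) \<le> ereal K" by simp
    qed
    moreover have "\<gamma>u i R \<le> K" using g(2)[rule_format, OF R0, of i] unfolding K_def by linarith
    ultimately have "max (SUP j. ereal (\<gamma> i j (W j (x j)))) (ereal (\<gamma>u i (unorm Nu u))) \<le> ereal K"
      unfolding R_def by simp
    moreover have "ereal (W i (traj f I x u M i))
            \<le> max (SUP j. ereal (\<gamma> i j (W j (x j)))) (ereal (\<gamma>u i (unorm Nu u)))"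
      using decay[rule_format, OF hx hu] .
    ultimately have "ereal (W i (traj f I x u M i)) \<le> ereal K"
      by (rule order_trans[rotated])
    then show ?thesis by simp
  qed
  obtain D where D: "\<forall>s\<ge>0. wL s \<le> K \<longrightarrow> s \<le> D" using Kinf_bound[OF wLU(1)] by blast
  have "N i (traj f I x u M i) \<le> D + 1 + C" for i
  proof -
    let ?y = "traj f I x u M i"
    have yR: "?y \<in> Rn (n i)" using Rnt by blast
    let ?d = "setdist_N (N i) (A i) ?y"
    have d0: "?d \<ge> 0"
      using setdist_nonneg[OF norms[rule_format] A_sub[rule_format] yR A_ne[rule_format]] .
    have "wL ?d \<le> wl i ?d" using wLU(3)[rule_format, OF d0] by simp
    also have "\<dots> \<le> W i ?y" using sandwich[rule_format, OF yR] by (rule conjunct1)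
    also have "\<dots> \<le> K" using WK .
    finally have "?d \<le> D" using D[rule_format, OF d0] by simp
    obtain a where a: "a \<in> A i" "N i (\<lambda>k. ?y k - a k) < ?d + 1"
      using setdist_wit[OF norms[rule_format] A_sub[rule_format] yR A_ne[rule_format]] by blast
    have aR: "a \<in> Rn (n i)" using a A_sub by blast
    have "N i ?y \<le> N i (\<lambda>k. ?y k - a k) + N i a" using norm_tri[OF norms[rule_format] yR aR] .
    then show ?thesis using a C \<open>?d \<le> D\<close> by fastforce
  qed
  then have "bdd_above (range (\<lambda>i. N i (traj f I x u M i)))" by (intro bdd_aboveI[where M="D + 1 + C"]) auto
  then show "inX n N (traj f I x us M)" unfolding teq inX_def using Rnt by simp
qed

end
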